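(* Let $\mathcal{D}$ be any distribution over $\mathbb{R}_{\geq 0}^k$ with $0<\mathrm{BRev}(\mathcal{D})<\infty$. Then there exists a sequence $X=(\vec{x}_i)_{i=1}^N$ ($N$ finite or $N=+\infty$) with every $\vec{x}_i\in\mathrm{supp}(\mathcal{D})$ and $\vec x_i\neq \vec 0$, such that \[\mathrm{MenuGap}(X)\geq \frac{\mathrm{Rev}(\mathcal{D})}{9\,\mathrm{BRev}(\mathcal{D})}.\] In particular, if $\mathrm{Rev}(\mathcal{D})/\mathrm{BRev}(\mathcal{D})=\infty$, then $\mathrm{MenuGap}(X)=\infty$.
   Context: Setting: one seller, one additive buyer, $k$ items; the buyer's value vector $\vec v\in\mathbb{R}^k_{\ge0}$ is drawn from a (possibly correlated) distribution $\mathcal{D}$. A mechanism $M$ is a set of options $(\vec q,p)$ with $\vec q\in[0,1]^k$, $p\in\mathbb{R}$, always containing the null option $(\vec 0,0)$; a buyer with values $\vec v$ selects an option maximizing $\vec v\cdot\vec q-p$ (ties broken arbitrarily; a maximizer is assumed to exist), and $\vec q^M(\vec v),p^M(\vec v)$ denote the allocation and price of the selected option. $\mathrm{Rev}(\mathcal{D},M)=\mathbb{E}_{\vec v\sim\mathcal{D}}[p^M(\vec v)]$, $\mathrm{Rev}(\mathcal{D})=\sup_M \mathrm{Rev}(\mathcal{D},M)$ (possibly $\infty$), and $\mathrm{BRev}(\mathcal{D})=\sup_{p\ge0} p\cdot\Pr_{\vec v\sim\mathcal{D}}[\sum_i v_i\ge p]$ (revenue of optimally pricing the grand bundle). MenuGap: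 Let $X=(\vec x_i)_{i=1}^N$ be an ordered sequence of nonzero points of $\mathbb{R}^k_{\ge0}$ ($N$ finite or $+\infty$), and $Q=(\vec q_i)_{i=0}^N$ an ordered sequence of points of $[0,1]^k$ with $\vec q_0=(0,\dots,0)$. Define $\mathrm{gap}_i^{X,Q}:=\min_{0\le j<i}(\vec q_i-\vec q_j)\cdot\vec x_i$ and $\mathrm{MenuGap}(X,Q):=\sum_{i=1}^N \mathrm{gap}_i^{X,Q}/\|\vec x_i\|_1$, and $\mathrm{MenuGap}(X):=\sup_Q \mathrm{MenuGap}(X,Q)$. *)

theory Defs
  imports "HOL-Probability.Probability"
begin

definition nonneg_orthant :: "(real^'k) set" where
  "nonneg_orthant = {v. \<forall>i. 0 \<le> v $ i}"

definition unit_cube :: "(real^'k) set" where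
  "unit_cube = {q. \<forall>i. 0 \<le> q $ i \<and> q $ i \<le> 1}"

definition l1norm :: "real^'k \<Rightarrow> real" where
  "l1norm x = (\<Sum>i\<in>UNIV. \<bar>x $ i\<bar>)"

definition supp :: "(real^'k) measure \<Rightarrow> (real^'k) set" where
  "supp D = {x. \<forall>e>0. emeasure D (ball x e) > 0}"

text \<open>A mechanism: a set of options (allocation, price), allocations in the unit cube,
  containing the null option.\<close>
definition is_mechanism :: "((real^'k) \<times> real) set \<Rightarrow> bool" where
  "is_mechanism M \<longleftrightarrow> M \<subseteq> unit_cube \<times> UNIV \<and> (0, 0) \<in> M"

text \<open>A buyer choice rule (arbitrary tie-breaking): for every value vector, an option of M
  maximising the buyer's utility.\<close>
definition buyer_choice :: "((real^'k) \<times> real) set \<Rightarrow> (real^'k \<Rightarrow> (real^'k) \<times> real) \<Rightarrow> bool" where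
  "buyer_choice M sel \<longleftrightarrow>
     (\<forall>v\<in>nonneg_orthant. sel v \<in> M \<and>
        (\<forall>opt\<in>M. v \<bullet> fst opt - snd opt \<le> v \<bullet> fst (sel v) - snd (sel v)))"

text \<open>Admissible (mechanism, choice rule): the price paid is a random variable whose
  expectation exists (negative part has finite expectation).\<close>
definition admissible :: "(real^'k) measure \<Rightarrow> ((real^'k) \<times> real) set
    \<Rightarrow> (real^'k \<Rightarrow> (real^'k) \<times> real) \<Rightarrow> bool" where
  "admissible D M sel \<longleftrightarrow> is_mechanism M \<and> buyer_choice M sel \<and>
     (\<lambda>v. snd (sel v)) \<in> borel_measurable D \<and>
     (\<integral>\<^sup>+ v. ennreal (- snd (sel v)) \<partial>D) < \<infinity>"

definition mech_rev :: "(real^'k) measure \<Rightarrow> (real^'k \<Rightarrow> (real^'k) \<times> real) \<Rightarrow> ereal" where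
  "mech_rev D sel =
     enn2ereal (\<integral>\<^sup>+ v. ennreal (snd (sel v)) \<partial>D) - enn2ereal (\<integral>\<^sup>+ v. ennreal (- snd (sel v)) \<partial>D)"

definition Rev :: "(real^'k) measure \<Rightarrow> ereal" where
  "Rev D = (SUP ms \<in> {(M, sel). admissible D M sel}. mech_rev D (snd ms))"

definition BRev :: "(real^'k) measure \<Rightarrow> ereal" where
  "BRev D = (SUP p \<in> {0..}. ereal (p * measure D {v \<in> space D. p \<le> (\<Sum>i\<in>UNIV. v $ i)}))"

text \<open>Sequences are indexed from 1 to N (N :: enat, possibly infinite); Q is indexed from 0.\<close>
definition gap :: "(nat \<Rightarrow> real^'k) \<Rightarrow> (nat \<Rightarrow> real^'k) \<Rightarrow> nat \<Rightarrow> real" where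
  "gap X Q i = Min ((\<lambda>j. (Q i - Q j) \<bullet> X i) ` {..<i})"

definition partial_menu_gap :: "(nat \<Rightarrow> real^'k) \<Rightarrow> (nat \<Rightarrow> real^'k) \<Rightarrow> nat \<Rightarrow> real" where
  "partial_menu_gap X Q n = (\<Sum>i=1..n. gap X Q i / l1norm (X i))"

text \<open>For N = \<infinity> the infinite sum is read as the liminf of the partial sums
  (equal to the sum whenever the series has a limit in the extended reals).\<close>
definition menu_gap_Q :: "enat \<Rightarrow> (nat \<Rightarrow> real^'k) \<Rightarrow> (nat \<Rightarrow> real^'k) \<Rightarrow> ereal" where
  "menu_gap_Q N X Q = (case N of
       enat n \<Rightarrow> ereal (partial_menu_gap X Q n)
     | \<infinity> \<Rightarrow> liminf (\<lambda>n. ereal (partial_menu_gap X Q n)))"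

definition valid_Q :: "(nat \<Rightarrow> real^'k) \<Rightarrow> bool" where
  "valid_Q Q \<longleftrightarrow> Q 0 = 0 \<and> (\<forall>i. Q i \<in> unit_cube)"

definition menu_gap :: "enat \<Rightarrow> (nat \<Rightarrow> real^'k) \<Rightarrow> ereal" where
  "menu_gap N X = (SUP Q \<in> {Q. valid_Q Q}. menu_gap_Q N X Q)"

end

theory Submission
  imports Defs
begin


lemma orthant_closed: "closed (nonneg_orthant :: (real^'k) set)"
proof -
  have "nonneg_orthant = (\<Inter>i. {v::real^'k. 0 \<le> v $ i})" unfolding nonneg_orthant_def by auto
  moreover have "closed {v::real^'k. 0 \<le> v $ i}" for i
    by (intro closed_Collect_le continuous_intros)
  ultimately show ?thesis using closed_INT[of UNIV "\<lambda>i. {v::real^'k. 0 \<le> v$i}"] by simp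
qed

lemma supp_sub_orthant:
  fixes D :: "(real^'k) measure"
  assumes "prob_space D" "sets D = sets borel" "emeasure D nonneg_orthant = 1"
  shows "supp D \<subseteq> nonneg_orthant"
proof
  fix x assume x: "x \<in> supp D"
  show "x \<in> nonneg_orthant"
  proof (rule ccontr)
    assume "x \<notin> nonneg_orthant"
    then obtain i where i: "x $ i < 0" unfolding nonneg_orthant_def by (auto simp: not_le)
    have sub: "ball x (- x $ i) \<subseteq> UNIV - nonneg_orthant"
    proof
      fix y assume "y \<in> ball x (- x$i)"
      then have "dist x y < - x$i" by simp
      moreover have "\<bar>x$i - y$i\<bar> \<le> dist x y"
        by (metis dist_real_def dist_vec_nth_le)
      ultimately have "y $ i < 0" by linarith
      then show "y \<in> UNIV - nonneg_orthant" unfolding nonneg_orthant_def by (auto simp: not_le)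
    qed
    interpret prob_space D by fact
    have "nonneg_orthant \<in> sets borel" using orthant_closed by (rule borel_closed)
    then have mo: "nonneg_orthant \<in> sets D" using assms(2) by simp
    have sp: "space D = UNIV" using sets_eq_imp_space_eq[OF assms(2)] by simp
    have "emeasure D (UNIV - nonneg_orthant) = emeasure D (space D) - emeasure D nonneg_orthant"
      using emeasure_compl[OF mo] sp by (simp add: emeasure_finite)
    also have "\<dots> = 0" using assms(3) emeasure_space_1 by simp
    finally have z: "emeasure D (UNIV - nonneg_orthant) = 0" .
    have "emeasure D (ball x (- x $ i)) \<le> emeasure D (UNIV - nonneg_orthant)"
      by (rule emeasure_mono[OF sub]) (metis sets.compl_sets mo sp)
    with z have "emeasure D (ball x (- x $ i)) = 0" by simp
    moreover have "emeasure D (ball x (- x $ i)) > 0" using x i unfolding supp_def by auto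
    ultimately show False by simp
  qed
qed

lemma supp_compl_null:
  fixes D :: "(real^'k) measure"
  assumes "sets D = sets borel"
  shows "UNIV - supp D \<in> null_sets D"
proof -
  let ?F = "{ball x e | x e. e > 0 \<and> emeasure D (ball x e) = 0}"
  have U: "UNIV - supp D = \<Union>?F"
  proof
    show "UNIV - supp D \<subseteq> \<Union>?F"
    proof
      fix x assume "x \<in> UNIV - supp D"
      then obtain e where "e > 0" "\<not> emeasure D (ball x e) > 0" unfolding supp_def by auto
      then have "ball x e \<in> ?F" "x \<in> ball x e" by (auto simp: not_less)
      then show "x \<in> \<Union>?F" by blast
    qed
    show "\<Union>?F \<subseteq> UNIV - supp D"
    proof
      fix y assume "y \<in> \<Union>?F"
      then obtain x e where e: "e > 0" "emeasure D (ball x e) = 0" "y \<in> ball x e" by auto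
      define d where "d = e - dist x y"
      have d: "d > 0" using e by (simp add: d_def dist_commute)
      have "ball y d \<subseteq> ball x e" unfolding d_def
      proof
        fix z assume "z \<in> ball y (e - dist x y)"
        then have "dist y z < e - dist x y" by simp
        moreover have "dist x z \<le> dist x y + dist y z" by (rule dist_triangle)
        ultimately show "z \<in> ball x e" by simp
      qed
      then have "emeasure D (ball y d) \<le> emeasure D (ball x e)"
        by (intro emeasure_mono) (use assms in auto)
      with e have "emeasure D (ball y d) = 0" by simp
      with d show "y \<in> UNIV - supp D" unfolding supp_def by auto
    qed
  qed
  obtain F' where F': "F' \<subseteq> ?F" "countable F'" "\<Union>F' = \<Union>?F"
    by (rule Lindelof[of ?F]) auto
  have "(\<Union>B\<in>F'. B) \<in> null_sets D"
  proof (rule null_sets_UN')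
    show "countable F'" by fact
    fix B assume "B \<in> F'"
    then obtain x e where "B = ball x e" "emeasure D (ball x e) = 0" using F' by blast
    then show "B \<in> null_sets D" using assms by (auto simp: null_sets_def)
  qed
  then show ?thesis using U F' by simp
qed

lemma sum_meas:
  fixes D :: "(real^'k) measure"
  assumes "sets D = sets borel"
  shows "(\<lambda>v::real^'k. \<Sum>i\<in>UNIV. v$i) \<in> borel_measurable D"
proof -
  have 1: "(\<lambda>v::real^'k. \<Sum>i\<in>UNIV. v$i) \<in> borel_measurable borel" by measurable
  have 2: "borel_measurable D = borel_measurable (borel::(real^'k) measure)"
    by (rule measurable_cong_sets[OF assms refl])
  show ?thesis using 1 2 by blast
qed

lemma BRev_bound:
  fixes D :: "(real^'k) measure"
  assumes "BRev D = ereal b" "0 \<le> p"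
  shows "p * measure D {v\<in>space D. p \<le> (\<Sum>i\<in>UNIV. v $ i)} \<le> b"
proof -
  have "ereal (p * measure D {v\<in>space D. p \<le> (\<Sum>i\<in>UNIV. v $ i)}) \<le> BRev D"
    unfolding BRev_def using assms(2) by (intro SUP_upper) auto
  then show ?thesis using assms(1) by simp
qed


lemma select_point:
  fixes D :: "(real^'k) measure"
  assumes P: "prob_space D" and S: "sets D = sets borel"
    and hb: "\<And>p. 0 \<le> p \<Longrightarrow> p * measure D {v\<in>space D. p \<le> (\<Sum>i\<in>UNIV. v$i)} \<le> b"
    and bpos: "b > 0" and A: "A \<in> sets D" and pos: "measure D A > 0"
  shows "\<exists>x\<in>A \<inter> supp D. measure D A * (\<Sum>i\<in>UNIV. x$i) \<le> 17/16 * b"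
proof (rule ccontr)
  interpret prob_space D by fact
  assume "\<not> ?thesis"
  then have H: "\<And>x. x \<in> A \<Longrightarrow> x \<in> supp D \<Longrightarrow> measure D A * (\<Sum>i\<in>UNIV. x$i) > 17/16 * b"
    by (auto simp: not_le)
  define a where "a = measure D A"
  define s where "s = 17/16 * b / a"
  have apos: "a > 0" using pos a_def by simp
  have spos: "s > 0" using apos bpos s_def by simp
  define S' where "S' = {v\<in>space D. s \<le> (\<Sum>i\<in>UNIV. v$i)}"
  have sp: "space D = UNIV" using sets_eq_imp_space_eq[OF S] by simp
  have S'm: "S' \<in> sets D" unfolding S'_def using sum_meas[OF S] by measurable
  have N: "UNIV - supp D \<in> null_sets D" by (rule supp_compl_null[OF S])
  have sub: "A \<subseteq> S' \<union> (UNIV - supp D)"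
  proof
    fix x assume x: "x \<in> A"
    show "x \<in> S' \<union> (UNIV - supp D)"
    proof (cases "x \<in> supp D")
      case True
      then have "a * (\<Sum>i\<in>UNIV. x$i) > 17/16 * b" using H x a_def by simp
      then have "s < (\<Sum>i\<in>UNIV. x$i)" unfolding s_def using apos by (simp add: field_simps)
      then show ?thesis unfolding S'_def using sp by auto
    qed auto
  qed
  have "a \<le> measure D (S' \<union> (UNIV - supp D))"
    unfolding a_def using sub S'm N by (intro finite_measure_mono) auto
  also have "\<dots> = measure D S'" using S'm N by (simp add: measure_Un_null_set)
  finally have aS: "a \<le> measure D S'" .
  have "s * measure D S' \<le> b" using hb[of s] spos unfolding S'_def by simp
  then have "s * a \<le> b" using aS spos by (meson mult_left_mono order_trans less_imp_le)
  moreover have "s * a = 17/16 * b" unfolding s_def using apos by simp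
  ultimately show False using bpos by simp
qed

lemma band_exists:
  fixes a x :: real
  assumes "a > 0" "a \<le> x" "x < a * 2^N"
  shows "\<exists>n<N. a * 2^n \<le> x \<and> x < 2 * (a * 2^n)"
  using assms(3)
proof (induction N)
  case 0 then show ?case using assms by simp
next
  case (Suc N)
  show ?case
  proof (cases "x < a * 2^N")
    case True then show ?thesis using Suc.IH by (meson less_SucI)
  next
    case False then show ?thesis using Suc.prems by (auto simp: mult.commute mult.left_commute)
  qed
qed

lemma window:
  fixes p :: "'a \<Rightarrow> real"
  assumes pm: "p \<in> borel_measurable D" and C: "ennreal C < (\<integral>\<^sup>+ v. ennreal (p v) \<partial>D)"
  shows "\<exists>K::nat. ennreal C < (\<integral>\<^sup>+ v. (if inverse(4^K) \<le> p v \<and> p v < 4^K then ennreal (p v) else 0) \<partial>D)"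
proof -
  define f where "f = (\<lambda>(K::nat) v. (if inverse(4^K) \<le> p v \<and> p v < (4::real)^K then ennreal (p v) else 0))"
  have inc: "incseq f"
  proof (rule incseq_SucI, rule le_funI)
    fix K v
    have "inverse ((4::real)^Suc K) \<le> inverse (4^K)" by (simp add: field_simps)
    moreover have "(4::real)^K \<le> 4^Suc K" by simp
    ultimately have w: "inverse(4^K) \<le> p v \<and> p v < (4::real)^K \<Longrightarrow> inverse ((4::real)^Suc K) \<le> p v \<and> p v < 4^Suc K"
      by linarith
    have e1: "f K v = (if inverse(4^K) \<le> p v \<and> p v < (4::real)^K then ennreal (p v) else 0)"
      by (simp only: f_def)
    have e2: "f (Suc K) v = (if inverse(4^Suc K) \<le> p v \<and> p v < (4::real)^Suc K then ennreal (p v) else 0)"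
      by (simp only: f_def)
    show "f K v \<le> f (Suc K) v"
    proof (cases "inverse(4^K) \<le> p v \<and> p v < (4::real)^K")
      case True
      have "f (Suc K) v = ennreal (p v)" unfolding e2 using w[OF True] by (rule if_P)
      then show ?thesis unfolding e1 using True by simp
    next
      case False
      have "f K v = 0" unfolding e1 using False by (rule if_not_P)
      then show ?thesis by simp
    qed
  qed
  have meas: "f K \<in> borel_measurable D" for K unfolding f_def using pm by measurable
  have sup: "(SUP K. f K v) = ennreal (p v)" for v
  proof (rule antisym)
    show "(SUP K. f K v) \<le> ennreal (p v)" unfolding f_def by (rule SUP_least) auto
    show "ennreal (p v) \<le> (SUP K. f K v)"
    proof (cases "p v > 0")
      case False then show ?thesis by (simp add: ennreal_neg)
    next
      case True
      obtain K1 where K1: "p v < 4^K1" using real_arch_pow[of 4 "p v"] by auto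
      obtain K2 where K2: "inverse (p v) < 4^K2" using real_arch_pow[of 4 "inverse (p v)"] by auto
      define K where "K = max K1 K2"
      have "p v < 4^K" using K1 power_increasing[of K1 K "4::real"] unfolding K_def by linarith
      moreover have "inverse (p v) < 4^K" using K2 power_increasing[of K2 K "4::real"] unfolding K_def by linarith
      then have "inverse (4^K) \<le> p v" using True
        using less_imp_inverse_less[of "inverse (p v)" "4^K"] by simp
      ultimately have "f K v = ennreal (p v)" unfolding f_def by simp
      then show ?thesis by (metis SUP_upper UNIV_I)
    qed
  qed
  have "(\<integral>\<^sup>+ v. ennreal (p v) \<partial>D) = (\<integral>\<^sup>+ v. (SUP K. f K v) \<partial>D)" by (simp add: sup)
  also have "\<dots> = (SUP K. integral\<^sup>N D (f K))"
    by (rule nn_integral_monotone_convergence_SUP[OF inc meas])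
  finally have "ennreal C < (SUP K. integral\<^sup>N D (f K))" using C by simp
  then obtain K where "ennreal C < integral\<^sup>N D (f K)" by (auto simp: less_SUP_iff)
  then show ?thesis unfolding f_def by auto
qed

lemma pow_id: "inverse ((4::real)^K) * 2^(4*K) = 4^K"
proof -
  have "(2::real)^(4*K) = 4^K * 4^K"
  proof -
    have "(2::real)^(4*K) = (2^4)^K" by (rule power_mult)
    also have "\<dots> = (4*4)^K" by simp
    also have "\<dots> = 4^K * 4^K" by (rule power_mult_distrib)
    finally show ?thesis .
  qed
  then show ?thesis by simp
qed

lemma band_bound:
  fixes p :: "'a \<Rightarrow> real"
  assumes fm: "finite_measure D" and pm: "p \<in> borel_measurable D"
  shows "(\<integral>\<^sup>+ v. (if inverse(4^K) \<le> p v \<and> p v < 4^K then ennreal (p v) else 0) \<partial>D)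
     \<le> ennreal (\<Sum>n<4*K. 2 * (inverse(4^K)*2^n) * measure D {v\<in>space D. inverse(4^K)*2^n \<le> p v \<and> p v < 2*(inverse(4^K)*2^n)})"
proof -
  define a :: real where "a = inverse(4^K)"
  define B where "B = (\<lambda>n::nat. {v\<in>space D. a*2^n \<le> p v \<and> p v < 2*(a*2^n)})"
  have apos: "a > 0" unfolding a_def by simp
  have Bm: "B n \<in> sets D" for n unfolding B_def using pm by measurable
  have pw: "(if a \<le> p v \<and> p v < 4^K then ennreal (p v) else 0)
        \<le> (\<Sum>n<4*K. ennreal (2*(a*2^n)) * indicator (B n) v)" if v: "v \<in> space D" for v
  proof (cases "a \<le> p v \<and> p v < 4^K")
    case True
    then have "p v < a * 2^(4*K)" using pow_id unfolding a_def by simp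
    then obtain n where n: "n < 4*K" "a*2^n \<le> p v" "p v < 2*(a*2^n)"
      using band_exists[OF apos] True by blast
    then have "v \<in> B n" unfolding B_def using v by simp
    then have "ennreal (p v) \<le> ennreal (2*(a*2^n)) * indicator (B n) v"
      using n by simp
    also have "\<dots> \<le> (\<Sum>n<4*K. ennreal (2*(a*2^n)) * indicator (B n) v)"
      by (rule member_le_sum) (use n in auto)
    finally show ?thesis using True by simp
  next
    case False
    have "(if a \<le> p v \<and> p v < 4^K then ennreal (p v) else 0) = 0" using False by (rule if_not_P)
    then show ?thesis by simp
  qed
  have "(\<integral>\<^sup>+ v. (if a \<le> p v \<and> p v < 4^K then ennreal (p v) else 0) \<partial>D)
      \<le> (\<integral>\<^sup>+ v. (\<Sum>n<4*K. ennreal (2*(a*2^n)) * indicator (B n) v) \<partial>D)"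
    by (rule nn_integral_mono) (rule pw)
  also have "\<dots> = (\<Sum>n<4*K. (\<integral>\<^sup>+ v. ennreal (2*(a*2^n)) * indicator (B n) v \<partial>D))"
    by (rule nn_integral_sum) (use Bm in measurable)
  also have "\<dots> = (\<Sum>n<4*K. ennreal (2*(a*2^n)) * emeasure D (B n))"
    by (rule sum.cong) (use Bm nn_integral_cmult_indicator in auto)
  also have "\<dots> = (\<Sum>n<4*K. ennreal (2*(a*2^n) * measure D (B n)))"
    by (rule sum.cong) (use Bm apos finite_measure.emeasure_eq_measure[OF fm] in \<open>auto simp: ennreal_mult\<close>)
  also have "\<dots> = ennreal (\<Sum>n<4*K. 2*(a*2^n) * measure D (B n))"
    by (rule sum_ennreal) (use apos in auto)
  finally show ?thesis unfolding a_def B_def .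
qed

lemma adm_facts:
  fixes D :: "(real^'k) measure" and v :: "real^'k"
  assumes adm: "admissible D M sel" and v: "v \<in> nonneg_orthant"
  shows "fst (sel v) \<in> unit_cube" "snd (sel v) \<le> v \<bullet> fst (sel v)"
    "\<And>w. w \<in> nonneg_orthant \<Longrightarrow> v \<bullet> fst (sel w) - snd (sel w) \<le> v \<bullet> fst (sel v) - snd (sel v)"
proof -
  have M: "M \<subseteq> unit_cube \<times> UNIV" "(0,0) \<in> M" and bc: "buyer_choice M sel"
    using adm unfolding admissible_def is_mechanism_def by auto
  have sv: "sel v \<in> M" and ic: "\<And>opt. opt \<in> M \<Longrightarrow> v \<bullet> fst opt - snd opt \<le> v \<bullet> fst (sel v) - snd (sel v)"
    using bc v unfolding buyer_choice_def by auto
  show "fst (sel v) \<in> unit_cube" using sv M by (auto simp: mem_Times_iff)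
  show "snd (sel v) \<le> v \<bullet> fst (sel v)" using ic[OF M(2)] by simp
  fix w :: "real^'k" assume "w \<in> nonneg_orthant"
  then have "sel w \<in> M" using bc unfolding buyer_choice_def by auto
  then show "v \<bullet> fst (sel w) - snd (sel w) \<le> v \<bullet> fst (sel v) - snd (sel v)" by (rule ic)
qed

lemma dot_bounds:
  fixes v q :: "real^'k"
  assumes "v \<in> nonneg_orthant" "q \<in> unit_cube"
  shows "0 \<le> v \<bullet> q" "v \<bullet> q \<le> (\<Sum>i\<in>UNIV. v $ i)"
proof -
  have h: "0 \<le> v$i" "0 \<le> q$i" "q$i \<le> 1" for i using assms unfolding nonneg_orthant_def unit_cube_def by auto
  show "0 \<le> v \<bullet> q" unfolding inner_vec_def using h by (auto intro!: sum_nonneg)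
  show "v \<bullet> q \<le> (\<Sum>i\<in>UNIV. v $ i)" unfolding inner_vec_def
    by (rule sum_mono) (use h in \<open>simp add: mult_left_le\<close>)
qed

lemma l1norm_orthant: "v \<in> nonneg_orthant \<Longrightarrow> l1norm v = (\<Sum>i\<in>UNIV. v $ i)"
  unfolding l1norm_def nonneg_orthant_def by simp

lemma zero_cube: "0 \<in> unit_cube" unfolding unit_cube_def by simp

lemma rev_bound:
  fixes D :: "(real^'k) measure"
  assumes "ereal C < mech_rev D sel" "0 \<le> C"
  shows "ennreal C < (\<integral>\<^sup>+ v. ennreal (snd (sel v)) \<partial>D)"
proof -
  have "mech_rev D sel \<le> enn2ereal (\<integral>\<^sup>+ v. ennreal (snd (sel v)) \<partial>D)"
    unfolding mech_rev_def by (rule ereal_diff_le_self) simp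
  with assms have "enn2ereal (ennreal C) < enn2ereal (\<integral>\<^sup>+ v. ennreal (snd (sel v)) \<partial>D)" by simp
  then show ?thesis by (simp add: less_ennreal.rep_eq)
qed

lemma arith1:
  fixes l s b P :: real
  assumes "l>0" "s>0" "b>0" "P * s \<le> 17/16*b"
  shows "(2*l*P)*(4/(17*b)) \<le> (l/2)/s"
proof -
  have "16 * l * (P * s) \<le> 16 * l * (17/16*b)" using assms by (intro mult_left_mono) auto
  then have "16 * l * P * s \<le> 17 * b * l" by (simp add: algebra_simps)
  then show ?thesis using assms by (simp add: field_simps)
qed
lemma par2: "(m::nat) < n \<Longrightarrow> m mod 2 = r \<Longrightarrow> n mod 2 = r \<Longrightarrow> m + 2 \<le> n" by presburger

lemma core:
  fixes D :: "(real^'k) measure"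
  assumes P: "prob_space D" and S: "sets D = sets borel" and O: "emeasure D nonneg_orthant = 1"
    and hb: "\<And>p. 0 \<le> p \<Longrightarrow> p * measure D {v\<in>space D. p \<le> (\<Sum>i\<in>UNIV. v$i)} \<le> b"
    and bpos: "b > 0" and adm: "admissible D M sel" and cpos: "c > 0"
    and hc: "ereal (c * (17/2) * b) < mech_rev D sel"
  shows "\<exists>L X Q. 1 \<le> L \<and> valid_Q Q \<and>
     (\<forall>i. 1 \<le> i \<and> i \<le> L \<longrightarrow> X i \<in> supp D \<and> X i \<noteq> 0 \<and> X i \<in> nonneg_orthant \<and> gap X Q i \<ge> 0)
     \<and> partial_menu_gap X Q L \<ge> c"
proof -
  have fm: "finite_measure D" using P unfolding prob_space_def by simp
  define p where "p = (\<lambda>v. snd (sel v))"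
  have pm: "p \<in> borel_measurable D" using adm unfolding admissible_def p_def by auto
  define C where "C = c * (17/2) * b"
  have C0: "0 \<le> C" unfolding C_def using cpos bpos by simp
  have hC: "ereal C < mech_rev D sel" unfolding C_def by (rule hc)
  have "ennreal C < (\<integral>\<^sup>+ v. ennreal (p v) \<partial>D)"
    unfolding p_def by (rule rev_bound[OF hC C0])
  then obtain K :: nat where K: "ennreal C < (\<integral>\<^sup>+ v. (if inverse(4^K) \<le> p v \<and> p v < 4^K then ennreal (p v) else 0) \<partial>D)"
    using window[OF pm] by blast
  define l where "l = (\<lambda>n::nat. inverse ((4::real)^K) * 2^n)"
  define B where "B = (\<lambda>n. {v\<in>space D. l n \<le> p v \<and> p v < 2 * l n})"
  define Pn where "Pn = (\<lambda>n. measure D (B n))"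
  define t where "t = (\<lambda>n. 2 * l n * Pn n)"
  have lpos: "l n > 0" for n unfolding l_def by simp
  have Bm: "B n \<in> sets D" for n unfolding B_def using pm by measurable
  have Pn0: "Pn n \<ge> 0" for n unfolding Pn_def by simp
  have t0: "t n \<ge> 0" for n unfolding t_def using lpos[of n] Pn0[of n] by simp
  have "(\<integral>\<^sup>+ v. (if inverse(4^K) \<le> p v \<and> p v < 4^K then ennreal (p v) else 0) \<partial>D) \<le> ennreal (\<Sum>n<4*K. t n)"
    unfolding t_def Pn_def B_def l_def by (rule band_bound[OF fm pm])
  with K have "ennreal C < ennreal (\<Sum>n<4*K. t n)" by (rule less_le_trans)
  then have CT: "C < (\<Sum>n<4*K. t n)" using ennreal_less_iff[OF C0] by simp
  define T where "T = (\<lambda>r::nat. \<Sum>n<4*K. if n mod 2 = r then t n else 0)"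
  have "(\<Sum>n<4*K. t n) = (\<Sum>n<4*K. (if n mod 2 = 0 then t n else 0) + (if n mod 2 = 1 then t n else 0))"
  proof (rule sum.cong)
    fix n :: nat
    have "n mod 2 = 0 \<or> n mod 2 = 1" by presburger
    then show "t n = (if n mod 2 = 0 then t n else 0) + (if n mod 2 = 1 then t n else 0)" by auto
  qed simp
  then have "(\<Sum>n<4*K. t n) = T 0 + T 1" unfolding T_def by (simp add: sum.distrib)
  then have "T 0 > C/2 \<or> T 1 > C/2" using CT by linarith
  then obtain r where r: "T r > C/2" by blast
  have "\<forall>n. \<exists>x. 0 < Pn n \<longrightarrow> x \<in> B n \<and> x \<in> supp D \<and> Pn n * (\<Sum>i\<in>UNIV. x$i) \<le> 17/16 * b"
  proof
    fix n
    show "\<exists>x. 0 < Pn n \<longrightarrow> x \<in> B n \<and> x \<in> supp D \<and> Pn n * (\<Sum>i\<in>UNIV. x$i) \<le> 17/16 * b"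
    proof (cases "0 < Pn n")
      case True
      then obtain x where "x \<in> B n \<inter> supp D" "measure D (B n) * (\<Sum>i\<in>UNIV. x$i) \<le> 17/16 * b"
        using select_point[OF P S hb bpos Bm] unfolding Pn_def by blast
      then show ?thesis unfolding Pn_def by blast
    qed auto
  qed
  then obtain xs where xs: "\<And>n. 0 < Pn n \<Longrightarrow> xs n \<in> B n \<and> xs n \<in> supp D \<and> Pn n * (\<Sum>i\<in>UNIV. xs n $ i) \<le> 17/16 * b"
    by metis
  define js where "js = filter (\<lambda>n. n mod 2 = r \<and> 0 < Pn n) [0..<4*K]"
  define L where "L = length js"
  define X where "X = (\<lambda>i. xs (js ! (i - 1)))"
  define Q where "Q = (\<lambda>i. if i = 0 \<or> L < i then 0 else fst (sel (X i)))"
  have js_set: "set js = {n. n < 4*K \<and> n mod 2 = r \<and> 0 < Pn n}" unfolding js_def by auto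
  have js_sorted: "sorted_wrt (<) js" unfolding js_def by (intro sorted_wrt_filter sorted_wrt_upt)
  have js_dist: "distinct js" unfolding js_def by simp
  have jsi: "js ! (i-1) \<in> set js" if "1 \<le> i" "i \<le> L" for i
    using that unfolding L_def by (intro nth_mem) auto
  have Xi: "X i \<in> B (js!(i-1)) \<and> X i \<in> supp D \<and> Pn (js!(i-1)) * (\<Sum>t\<in>UNIV. X i $ t) \<le> 17/16*b
      \<and> (js!(i-1)) mod 2 = r" if "1 \<le> i" "i \<le> L" for i
    using xs jsi[OF that] js_set unfolding X_def by auto
  have Xo: "X i \<in> nonneg_orthant" if "1 \<le> i" "i \<le> L" for i
    using Xi[OF that] supp_sub_orthant[OF P S O] by auto
  have pX: "l (js!(i-1)) \<le> p (X i)" "p (X i) < 2 * l (js!(i-1))" if "1 \<le> i" "i \<le> L" for i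
    using Xi[OF that] unfolding B_def by auto
  have Qi: "Q i = fst (sel (X i))" if "1 \<le> i" "i \<le> L" for i using that unfolding Q_def by auto
  have order: "4 * l (js!(j-1)) \<le> l (js!(i-1))" if "1 \<le> j" "j < i" "i \<le> L" for i j
  proof -
    have "js!(j-1) < js!(i-1)"
      using sorted_wrt_nth_less[OF js_sorted, of "j-1" "i-1"] that unfolding L_def by auto
    moreover have "js!(j-1) mod 2 = r" "js!(i-1) mod 2 = r" using Xi that by auto
    ultimately have "js!(j-1) + 2 \<le> js!(i-1)" by (rule par2)
    then have "(2::real)^(js!(j-1) + 2) \<le> 2^(js!(i-1))" by (rule power_increasing) simp
    then have "4 * (2::real)^(js!(j-1)) \<le> 2^(js!(i-1))" by (simp add: power_add)
    then show ?thesis unfolding l_def by simp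
  qed
  have gapb: "gap X Q i \<ge> l (js!(i-1)) / 2" if i: "1 \<le> i" "i \<le> L" for i
  proof -
    have "l (js!(i-1)) / 2 \<le> (Q i - Q j) \<bullet> X i" if j: "j < i" for j
    proof (cases "j = 0")
      case True
      then have "(Q i - Q j) \<bullet> X i = X i \<bullet> fst (sel (X i))" using Qi[OF i] by (simp add: Q_def inner_commute)
      moreover have "p (X i) \<le> X i \<bullet> fst (sel (X i))" using adm_facts(2)[OF adm Xo[OF i]] p_def by simp
      ultimately show ?thesis using pX[OF i] lpos[of "js!(i-1)"] by simp
    next
      case False
      then have j1: "1 \<le> j" "j \<le> L" using j i by auto
      have "(Q i - Q j) \<bullet> X i = X i \<bullet> fst (sel (X i)) - X i \<bullet> fst (sel (X j))"
        by (simp add: Qi[OF i] Qi[OF j1] inner_commute inner_diff_right)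
      moreover have "p (X i) - p (X j) \<le> X i \<bullet> fst (sel (X i)) - X i \<bullet> fst (sel (X j))"
        using adm_facts(3)[OF adm Xo[OF i] Xo[OF j1]] p_def by simp
      moreover have "p (X j) < 2 * l (js!(j-1))" using pX[OF j1] by simp
      moreover have "4 * l (js!(j-1)) \<le> l (js!(i-1))" using order[OF j1(1) j i(2)] .
      ultimately show ?thesis using pX[OF i] by simp
    qed
    moreover have "{..<i} \<noteq> {}" using i lessThan_empty_iff[of i] by simp
    ultimately show ?thesis unfolding gap_def by (subst Min_ge_iff) auto
  qed
  define g where "g = (\<lambda>n. t n * (4 / (17 * b)))"
  have sX: "0 < (\<Sum>t\<in>UNIV. X i $ t)" "l1norm (X i) = (\<Sum>t\<in>UNIV. X i $ t)" if i: "1 \<le> i" "i \<le> L" for i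
  proof -
    have "p (X i) \<le> X i \<bullet> fst (sel (X i))" using adm_facts(2)[OF adm Xo[OF i]] p_def by simp
    also have "\<dots> \<le> (\<Sum>t\<in>UNIV. X i $ t)" by (rule dot_bounds(2)[OF Xo[OF i] adm_facts(1)[OF adm Xo[OF i]]])
    finally show "0 < (\<Sum>t\<in>UNIV. X i $ t)" using pX[OF i] lpos[of "js!(i-1)"] by simp
    show "l1norm (X i) = (\<Sum>t\<in>UNIV. X i $ t)" by (rule l1norm_orthant[OF Xo[OF i]])
  qed
  have termb: "g (js!(i-1)) \<le> gap X Q i / l1norm (X i)" if i: "1 \<le> i" "i \<le> L" for i
  proof -
    have "g (js!(i-1)) \<le> (l (js!(i-1)) / 2) / (\<Sum>t\<in>UNIV. X i $ t)"
      unfolding g_def t_def by (rule arith1) (use lpos sX[OF i] bpos Xi[OF i] in auto)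
    also have "\<dots> \<le> gap X Q i / (\<Sum>t\<in>UNIV. X i $ t)"
      by (rule divide_right_mono) (use gapb[OF i] sX[OF i] in auto)
    finally show ?thesis using sX[OF i] by simp
  qed
  have "(\<Sum>i=1..L. g (js!(i-1))) = (\<Sum>i<L. g (js!i))" by (simp add: sum.atLeast1_atMost_eq)
  also have "\<dots> = sum_list (map g js)" by (simp add: sum_list_sum_nth atLeast0LessThan L_def)
  also have "\<dots> = sum g (set js)" by (simp add: sum_list_distinct_conv_sum_set js_dist)
  also have "\<dots> = (\<Sum>n<4*K. if n mod 2 = r \<and> 0 < Pn n then g n else 0)"
  proof -
    have e: "set js = {n\<in>{..<4*K}. n mod 2 = r \<and> 0 < Pn n}" using js_set by auto
    show ?thesis unfolding e by (rule sum.inter_filter) simp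
  qed
  also have "\<dots> = (\<Sum>n<4*K. if n mod 2 = r then t n else 0) * (4 / (17 * b))"
    unfolding sum_distrib_right
  proof (rule sum.cong)
    fix n
    have "Pn n = 0 \<or> 0 < Pn n" using Pn0[of n] by linarith
    then show "(if n mod 2 = r \<and> 0 < Pn n then g n else 0) = (if n mod 2 = r then t n else 0) * (4 / (17 * b))"
      unfolding g_def t_def by auto
  qed simp
  also have "\<dots> = T r * (4 / (17 * b))" unfolding T_def ..
  finally have sumeq: "(\<Sum>i=1..L. g (js!(i-1))) = T r * (4 / (17 * b))" .
  have "c = (C/2) * (4 / (17 * b))" unfolding C_def using bpos by simp
  also have "\<dots> < T r * (4 / (17 * b))" using r bpos by (intro mult_strict_right_mono) auto
  also have "\<dots> \<le> (\<Sum>i=1..L. gap X Q i / l1norm (X i))"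
    unfolding sumeq[symmetric] by (rule sum_mono) (use termb in auto)
  finally have main: "c < partial_menu_gap X Q L" unfolding partial_menu_gap_def .
  have L1: "1 \<le> L"
  proof (rule ccontr)
    assume "\<not> 1 \<le> L" then have "L = 0" by simp
    then show False using main cpos unfolding partial_menu_gap_def by simp
  qed
  have vQ: "valid_Q Q"
    unfolding valid_Q_def
  proof
    show "Q 0 = 0" unfolding Q_def by simp
    show "\<forall>i. Q i \<in> unit_cube"
    proof
      fix i show "Q i \<in> unit_cube"
      proof (cases "i = 0 \<or> L < i")
        case True then show ?thesis unfolding Q_def using zero_cube by simp
      next
        case False
        then have i: "1 \<le> i" "i \<le> L" by auto
        show ?thesis using Qi[OF i] adm_facts(1)[OF adm Xo[OF i]] by simp
      qed
    qed
  qed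
  have props: "\<forall>i. 1 \<le> i \<and> i \<le> L \<longrightarrow> X i \<in> supp D \<and> X i \<noteq> 0 \<and> X i \<in> nonneg_orthant \<and> gap X Q i \<ge> 0"
  proof (intro allI impI)
    fix i assume "1 \<le> i \<and> i \<le> L"
    then have i: "1 \<le> i" "i \<le> L" by auto
    have "X i \<noteq> 0" using sX(1)[OF i] by auto
    moreover have "gap X Q i \<ge> 0" using gapb[OF i] lpos[of "js!(i-1)"] by simp
    ultimately show "X i \<in> supp D \<and> X i \<noteq> 0 \<and> X i \<in> nonneg_orthant \<and> gap X Q i \<ge> 0"
      using Xi[OF i] Xo[OF i] by auto
  qed
  show ?thesis using L1 vQ props main by (intro exI[of _ L] exI[of _ X] exI[of _ Q]) auto
qed


lemma vec_ineq:
  fixes a q x :: "real^'k"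
  assumes "x \<in> nonneg_orthant" "\<And>t. c * q $ t \<le> a $ t"
  shows "c * (q \<bullet> x) \<le> a \<bullet> x"
proof -
  have "c * (q \<bullet> x) = (\<Sum>t\<in>UNIV. (c * q $ t) * x $ t)"
    unfolding inner_vec_def by (simp add: sum_distrib_left mult.assoc)
  also have "\<dots> \<le> (\<Sum>t\<in>UNIV. a $ t * x $ t)"
    by (rule sum_mono, rule mult_right_mono) (use assms in \<open>auto simp: nonneg_orthant_def\<close>)
  also have "\<dots> = a \<bullet> x" unfolding inner_vec_def by simp
  finally show ?thesis .
qed

lemma concat:
  fixes Lb :: "nat \<Rightarrow> nat" and Xb Qb :: "nat \<Rightarrow> nat \<Rightarrow> real^'k" and Pr :: "real^'k \<Rightarrow> bool"
  assumes L1: "\<And>k. 1 \<le> Lb k" and vQ: "\<And>k. valid_Q (Qb k)"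
    and props: "\<And>k i. 1 \<le> i \<Longrightarrow> i \<le> Lb k \<Longrightarrow> Pr (Xb k i) \<and> Xb k i \<noteq> 0 \<and> Xb k i \<in> nonneg_orthant \<and> gap (Xb k) (Qb k) i \<ge> 0"
    and big: "\<And>k. partial_menu_gap (Xb k) (Qb k) (Lb k) \<ge> 2^(k+1)"
  shows "\<exists>X. (\<forall>i. 1 \<le> i \<longrightarrow> Pr (X i) \<and> X i \<noteq> 0) \<and> menu_gap \<infinity> X = \<infinity>"
proof -
  define s where "s = (\<lambda>k. \<Sum>m<k. Lb m)"
  have sSuc: "s (Suc k) = s k + Lb k" for k unfolding s_def by simp
  have s0: "s 0 = 0" unfolding s_def by simp
  have smono: "strict_mono s" by (rule strict_monoI_Suc) (use sSuc L1 in \<open>simp add: Suc_le_eq\<close>)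
  have sge: "k \<le> s k" for k using smono by (rule strict_mono_imp_increasing)
  define blk where "blk = (\<lambda>i. LEAST k. i \<le> s (Suc k))"
  have blk1: "i \<le> s (Suc (blk i))" for i
  proof -
    have "i \<le> s (Suc i)" using sge[of "Suc i"] by simp
    then show ?thesis unfolding blk_def by (rule LeastI)
  qed
  have blk2: "s (blk i) < i" if "1 \<le> i" for i
  proof (cases "blk i")
    case 0 then show ?thesis using s0 that by simp
  next
    case (Suc k)
    then have "k < blk i" by simp
    then have "\<not> i \<le> s (Suc k)" unfolding blk_def by (rule not_less_Least)
    then show ?thesis using Suc by simp
  qed
  have blk_eq: "blk i = k" if "s k < i" "i \<le> s (Suc k)" for i k
  proof -
    have le: "blk i \<le> k" unfolding blk_def using that(2) by (rule Least_le)
    show ?thesis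
    proof (rule ccontr)
      assume "blk i \<noteq> k" then have "Suc (blk i) \<le> k" using le by simp
      then have "s (Suc (blk i)) \<le> s k" using smono by (simp add: strict_mono_less_eq)
      then show False using blk1[of i] that by simp
    qed
  qed
  have blk_mono: "blk j \<le> blk i" if "j \<le> i" for i j
  proof -
    have "j \<le> s (Suc (blk i))" using blk1[of i] that by simp
    then show ?thesis by (subst blk_def) (rule Least_le)
  qed
  define loc where "loc = (\<lambda>i. i - s (blk i))"
  have loc: "1 \<le> loc i" "loc i \<le> Lb (blk i)" if "1 \<le> i" for i
    using blk1[of i] blk2[OF that] sSuc[of "blk i"] unfolding loc_def by auto
  define h where "h = (\<lambda>k::nat. (1/2::real)^k)"
  have h01: "0 < h k" "h k \<le> 1" for k unfolding h_def by (auto simp: power_le_one)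
  have hanti: "h k \<le> h m" if "m \<le> k" for m k unfolding h_def using that by (simp add: power_decreasing)
  have hSuc: "h (Suc k) = h k / 2" for k unfolding h_def by simp
  define T where "T = (\<lambda>k (q::real^'k). (\<chi> t. (1 - h k) + h (Suc k) * q $ t) :: real^'k)"
  have Tt: "T k q $ t = (1 - h k) + h (Suc k) * q $ t" for k q t unfolding T_def by simp
  have cube: "0 \<le> q $ t" "q $ t \<le> 1" if "q \<in> unit_cube" for q :: "real^'k" and t
    using that unfolding unit_cube_def by auto
  have Qb_cube: "Qb k i \<in> unit_cube" for k i using vQ[of k] unfolding valid_Q_def by auto
  have Qb0: "Qb k 0 = 0" for k using vQ[of k] unfolding valid_Q_def by auto
  have Tcube: "T k (Qb k i) \<in> unit_cube" for k i
  proof -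
    have "0 \<le> T k (Qb k i) $ t \<and> T k (Qb k i) $ t \<le> 1" for t
    proof -
      have "h (Suc k) * Qb k i $ t \<le> h (Suc k)" using cube[OF Qb_cube, of k i t] h01[of "Suc k"]
        by (simp add: mult_left_le)
      moreover have "0 \<le> h (Suc k) * Qb k i $ t" using cube[OF Qb_cube, of k i t] h01[of "Suc k"] by simp
      moreover have "h (Suc k) \<le> h k" using hSuc[of k] h01[of k] by linarith
      ultimately show ?thesis unfolding Tt using h01[of k] by linarith
    qed
    then show ?thesis unfolding unit_cube_def by simp
  qed
  define X where "X = (\<lambda>i. Xb (blk i) (loc i))"
  define Q where "Q = (\<lambda>i. if i = 0 then 0 else T (blk i) (Qb (blk i) (loc i)))"
  have vQQ: "valid_Q Q" unfolding valid_Q_def Q_def using Tcube zero_cube by auto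
  have PX: "Pr (X i) \<and> X i \<noteq> 0 \<and> X i \<in> nonneg_orthant \<and> gap (Xb (blk i)) (Qb (blk i)) (loc i) \<ge> 0" if "1 \<le> i" for i
    unfolding X_def using props loc[OF that] by blast
  have gapX: "h (Suc (blk i)) * gap (Xb (blk i)) (Qb (blk i)) (loc i) \<le> gap X Q i" if i: "1 \<le> i" for i
  proof -
    define k where "k = blk i"
    define li where "li = loc i"
    define G where "G = gap (Xb k) (Qb k) li"
    define x where "x = X i"
    define q where "q = Qb k li"
    have xo: "x \<in> nonneg_orthant" using PX[OF i] x_def by simp
    have li: "1 \<le> li" "li \<le> Lb k" using loc[OF i] li_def k_def by auto
    have fin: "finite ((\<lambda>j. (Qb k li - Qb k j) \<bullet> Xb k li) ` {..<li})" by simp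
    have Gle: "G \<le> (q - Qb k j) \<bullet> x" if "j < li" for j
      unfolding G_def q_def x_def X_def k_def[symmetric] li_def[symmetric] gap_def
      by (rule Min_le[OF fin]) (use that in auto)
    have G0: "G \<le> q \<bullet> x" using Gle[of 0] li Qb0 by simp
    have Qi: "Q i = T k q" unfolding Q_def q_def k_def li_def using i by simp
    have "h (Suc k) * G \<le> (Q i - Q j) \<bullet> x" if j: "j < i" for j
    proof (cases "j = 0")
      case True
      have "h (Suc k) * (q \<bullet> x) \<le> (Q i - Q j) \<bullet> x"
      proof (rule vec_ineq[OF xo])
        fix t show "h (Suc k) * q $ t \<le> (Q i - Q j) $ t"
          using True Qi Tt[of k q t] h01[of k] by (simp add: Q_def)
      qed
      then show ?thesis using G0 h01[of "Suc k"] by (meson mult_left_mono less_imp_le order_trans)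
    next
      case False
      then have j1: "1 \<le> j" by simp
      have Qj: "Q j = T (blk j) (Qb (blk j) (loc j))" unfolding Q_def using False by simp
      have "blk j \<le> k" unfolding k_def using blk_mono j by simp
      then consider "blk j < k" | "blk j = k" by linarith
      then show ?thesis
      proof cases
        case 1
        have "h (Suc k) * (q \<bullet> x) \<le> (Q i - Q j) \<bullet> x"
        proof (rule vec_ineq[OF xo])
          fix t
          have "T (blk j) (Qb (blk j) (loc j)) $ t \<le> 1 - h (Suc (blk j))"
          proof -
            have "h (Suc (blk j)) * Qb (blk j) (loc j) $ t \<le> h (Suc (blk j))"
              using cube[OF Qb_cube, of "blk j" "loc j" t] h01[of "Suc (blk j)"] by (simp add: mult_left_le)
            then show ?thesis unfolding Tt using hSuc[of "blk j"] by linarith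
          qed
          moreover have "h k \<le> h (Suc (blk j))" using 1 by (intro hanti) simp
          ultimately show "h (Suc k) * q $ t \<le> (Q i - Q j) $ t"
            using Qi Qj Tt[of k q t] by simp
        qed
        then show ?thesis using G0 h01[of "Suc k"] by (meson mult_left_mono less_imp_le order_trans)
      next
        case 2
        have lj: "loc j < li" "1 \<le> loc j" using loc[OF j1] blk2[OF j1] j 2 unfolding li_def loc_def k_def by auto
        have "(Q i - Q j) = h (Suc k) *\<^sub>R (q - Qb k (loc j))"
        proof (subst vec_eq_iff, rule allI)
          fix t
          show "(Q i - Q j) $ t = (h (Suc k) *\<^sub>R (q - Qb k (loc j))) $ t"
            unfolding Qi Qj 2 vector_minus_component vector_scaleR_component Tt by (simp add: algebra_simps)
        qed
        then have "(Q i - Q j) \<bullet> x = h (Suc k) * ((q - Qb k (loc j)) \<bullet> x)" by simp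
        moreover have "G \<le> (q - Qb k (loc j)) \<bullet> x" by (rule Gle[OF lj(1)])
        ultimately show ?thesis using h01[of "Suc k"] by simp
      qed
    qed
    moreover have "{..<i} \<noteq> {}" using i lessThan_empty_iff[of i] by simp
    ultimately show ?thesis unfolding gap_def x_def G_def k_def li_def by (subst Min_ge_iff) auto
  qed
  define f where "f = (\<lambda>i. gap X Q i / l1norm (X i))"
  define fb where "fb = (\<lambda>k i. gap (Xb k) (Qb k) i / l1norm (Xb k i))"
  have l1pos: "0 < l1norm y" if ny: "y \<noteq> 0" for y :: "real^'k"
  proof -
    have "\<exists>t. y $ t \<noteq> 0" using ny by (auto simp: vec_eq_iff)
    then obtain t where "y $ t \<noteq> 0" by blast
    then have "0 < \<bar>y $ t\<bar>" by simp
    also have "\<dots> \<le> l1norm y" unfolding l1norm_def by (rule member_le_sum) auto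
    finally show ?thesis .
  qed
  have fX: "h (Suc (blk i)) * fb (blk i) (loc i) \<le> f i" "0 \<le> fb (blk i) (loc i)" if i: "1 \<le> i" for i
  proof -
    have np: "0 < l1norm (X i)" using PX[OF i] l1pos by blast
    have "h (Suc (blk i)) * fb (blk i) (loc i) = (h (Suc (blk i)) * gap (Xb (blk i)) (Qb (blk i)) (loc i)) / l1norm (X i)"
      unfolding fb_def X_def by simp
    also have "\<dots> \<le> f i" unfolding f_def by (rule divide_right_mono[OF gapX[OF i]]) (use np in simp)
    finally show "h (Suc (blk i)) * fb (blk i) (loc i) \<le> f i" .
    show "0 \<le> fb (blk i) (loc i)" unfolding fb_def using PX[OF i] np X_def by simp
  qed
  have f0: "0 \<le> f i" if "1 \<le> i" for i
    using fX[OF that] h01[of "Suc (blk i)"] by (meson mult_nonneg_nonneg less_imp_le order_trans)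
  have PS: "partial_menu_gap X Q n = (\<Sum>i=1..n. f i)" for n unfolding partial_menu_gap_def f_def ..
  have PSmono: "partial_menu_gap X Q m \<le> partial_menu_gap X Q n" if "m \<le> n" for m n
    unfolding PS by (rule sum_mono2) (use that f0 in auto)
  have blockK: "1 \<le> (\<Sum>i=s K + 1..s K + Lb K. f i)" for K
  proof -
    have "(\<Sum>i=s K + 1..s K + Lb K. f i) = (\<Sum>li=1..Lb K. f (li + s K))"
      using sum.shift_bounds_cl_nat_ivl[of f 1 "s K" "Lb K"] by (simp add: add.commute)
    also have "\<dots> \<ge> (\<Sum>li=1..Lb K. h (Suc K) * fb K li)"
    proof (rule sum_mono)
      fix li assume "li \<in> {1..Lb K}"
      then have li: "1 \<le> li" "li \<le> Lb K" by auto
      have b: "blk (li + s K) = K" by (rule blk_eq) (use li sSuc in auto)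
      have lc: "loc (li + s K) = li" unfolding loc_def b by simp
      show "h (Suc K) * fb K li \<le> f (li + s K)" using fX(1)[of "li + s K"] li b lc by simp
    qed
    also have "(\<Sum>li=1..Lb K. h (Suc K) * fb K li) = h (Suc K) * partial_menu_gap (Xb K) (Qb K) (Lb K)"
      unfolding partial_menu_gap_def fb_def by (simp add: sum_distrib_left)
    also have "\<dots> \<ge> h (Suc K) * 2^(K+1)" using big[of K] h01[of "Suc K"] by simp
    also have "h (Suc K) * 2^(K+1) = 1" unfolding h_def by (simp add: power_one_over)
    finally show ?thesis by simp
  qed
  have PSs: "real K \<le> partial_menu_gap X Q (s K)" for K
  proof (induction K)
    case 0 then show ?case using s0 unfolding PS by simp
  next
    case (Suc K)
    have "partial_menu_gap X Q (s (Suc K)) = partial_menu_gap X Q (s K) + (\<Sum>i=s K + 1..s K + Lb K. f i)"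
      unfolding PS sSuc by (rule sum.ub_add_nat) simp
    then show ?case using Suc blockK[of K] by simp
  qed
  have lim: "((\<lambda>n. ereal (partial_menu_gap X Q n)) \<longlongrightarrow> \<infinity>) sequentially"
    unfolding tendsto_PInfty
  proof
    fix r :: real
    obtain K :: nat where K: "r < real K" using reals_Archimedean2 by blast
    have "\<forall>n\<ge>s K. ereal r < ereal (partial_menu_gap X Q n)"
    proof (intro allI impI)
      fix n assume "s K \<le> n"
      then have "r < partial_menu_gap X Q n" using K PSs[of K] PSmono[of "s K" n] by linarith
      then show "ereal r < ereal (partial_menu_gap X Q n)" by simp
    qed
    then show "eventually (\<lambda>n. ereal r < ereal (partial_menu_gap X Q n)) sequentially"
      by (simp add: eventually_at_top_linorder) blast
  qed
  have "menu_gap_Q \<infinity> X Q = \<infinity>" unfolding menu_gap_Q_def using lim by (simp add: lim_imp_Liminf)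
  moreover have "menu_gap_Q \<infinity> X Q \<le> menu_gap \<infinity> X" unfolding menu_gap_def
    by (rule SUP_upper) (use vQQ in simp)
  ultimately have "menu_gap \<infinity> X = \<infinity>" by simp
  moreover have "\<forall>i. 1 \<le> i \<longrightarrow> Pr (X i) \<and> X i \<noteq> 0" using PX by blast
  ultimately show ?thesis by blast
qed


theorem theorem3p1:
  fixes D :: "(real^'k) measure"
  assumes "prob_space D"
    and "sets D = sets borel"
    and "emeasure D nonneg_orthant = 1"
    and "0 < BRev D" and "BRev D < \<infinity>"
  shows "\<exists>(N::enat) (X::nat \<Rightarrow> real^'k).
           (\<forall>i. 1 \<le> i \<and> enat i \<le> N \<longrightarrow> X i \<in> supp D \<and> X i \<noteq> 0) \<and>
           menu_gap N X \<ge> Rev D / (9 * BRev D)"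
proof -
  note P = assms(1) and S = assms(2) and O = assms(3)
  obtain b where Bb: "BRev D = ereal b" using assms(4,5) by (cases "BRev D") auto
  have bpos: "b > 0" using assms(4) Bb by simp
  have hb: "\<And>p. 0 \<le> p \<Longrightarrow> p * measure D {v\<in>space D. p \<le> (\<Sum>i\<in>UNIV. v$i)} \<le> b"
    using BRev_bound[OF Bb] by blast
  have nine: "9 * BRev D = ereal (9 * b)" using Bb by simp
  have vz: "valid_Q (\<lambda>_. 0 :: real^'k)" unfolding valid_Q_def using zero_cube by simp
  have RevSUP: "Rev D = (SUP ms \<in> {(M, sel). admissible D M sel}. mech_rev D (snd ms))"
    unfolding Rev_def ..
  have cs: "Rev D \<le> 0 \<or> (\<exists>r. Rev D = ereal r \<and> r > 0) \<or> Rev D = \<infinity>"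
  proof (cases "Rev D")
    case (real r) then show ?thesis by (cases "r > 0") auto
  qed auto
  consider (neg) "Rev D \<le> 0" | (fin) r where "Rev D = ereal r" "r > 0" | (inf) "Rev D = \<infinity>"
    using cs by blast
  then show ?thesis
  proof cases
    case neg
    have e: "menu_gap_Q (enat 0) (\<lambda>_. 0 :: real^'k) (\<lambda>_. 0) = 0"
      unfolding menu_gap_Q_def partial_menu_gap_def by simp
    have "menu_gap_Q (enat 0) (\<lambda>_. 0 :: real^'k) (\<lambda>_. 0) \<le> menu_gap (enat 0) (\<lambda>_. 0 :: real^'k)"
      unfolding menu_gap_def by (rule SUP_upper) (use vz in simp)
    then have "0 \<le> menu_gap (enat 0) (\<lambda>_. 0 :: real^'k)" using e by simp
    moreover have "Rev D / (9 * BRev D) \<le> 0" unfolding nine using neg bpos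
      by (cases "Rev D") (auto simp: divide_le_0_iff)
    ultimately show ?thesis by (intro exI[of _ "enat 0"] exI[of _ "\<lambda>_. 0 :: real^'k"]) (auto intro: order_trans)
  next
    case (fin r)
    define c where "c = r / (9 * b)"
    have cpos: "c > 0" unfolding c_def using fin bpos by simp
    have "ereal (c * (17/2) * b) < Rev D"
      unfolding c_def using fin bpos by (simp add: field_simps)
    then obtain ms where ms: "ms \<in> {(M, sel). admissible D M sel}" "ereal (c * (17/2) * b) < mech_rev D (snd ms)"
      unfolding RevSUP by (auto simp: less_SUP_iff)
    then have adm: "admissible D (fst ms) (snd ms)" by (cases ms) auto
    obtain L X Q where LXQ: "1 \<le> L" "valid_Q Q"
      "\<forall>i. 1 \<le> i \<and> i \<le> L \<longrightarrow> X i \<in> supp D \<and> X i \<noteq> 0 \<and> X i \<in> nonneg_orthant \<and> gap X Q i \<ge> 0"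
      "partial_menu_gap X Q L \<ge> c"
      using core[OF P S O hb bpos adm cpos ms(2)] by blast
    have "menu_gap_Q (enat L) X Q \<le> menu_gap (enat L) X" unfolding menu_gap_def
      by (rule SUP_upper) (use LXQ(2) in simp)
    moreover have "menu_gap_Q (enat L) X Q \<ge> ereal c" unfolding menu_gap_Q_def using LXQ(4) by simp
    moreover have "Rev D / (9 * BRev D) = ereal c" unfolding nine fin(1) c_def using bpos by simp
    ultimately have "menu_gap (enat L) X \<ge> Rev D / (9 * BRev D)" by simp
    moreover have "\<forall>i. 1 \<le> i \<and> enat i \<le> enat L \<longrightarrow> X i \<in> supp D \<and> X i \<noteq> 0" using LXQ(3) by auto
    ultimately show ?thesis by blast
  next
    case inf
    have "\<forall>k::nat. \<exists>L X Q. 1 \<le> L \<and> valid_Q Q \<and>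
        (\<forall>i. 1 \<le> i \<and> i \<le> L \<longrightarrow> X i \<in> supp D \<and> X i \<noteq> 0 \<and> X i \<in> nonneg_orthant \<and> gap X Q i \<ge> 0)
        \<and> partial_menu_gap X Q L \<ge> 2^(k+1)"
    proof
      fix k :: nat
      have "ereal (2^(k+1) * (17/2) * b) < Rev D" using inf by simp
      then obtain ms where ms: "ms \<in> {(M, sel). admissible D M sel}" "ereal (2^(k+1) * (17/2) * b) < mech_rev D (snd ms)"
        unfolding RevSUP by (auto simp: less_SUP_iff)
      then have adm: "admissible D (fst ms) (snd ms)" by (cases ms) auto
      have c2: "(0::real) < 2^(k+1)" by simp
      show "\<exists>L X Q. 1 \<le> L \<and> valid_Q Q \<and>
        (\<forall>i. 1 \<le> i \<and> i \<le> L \<longrightarrow> X i \<in> supp D \<and> X i \<noteq> 0 \<and> X i \<in> nonneg_orthant \<and> gap X Q i \<ge> 0)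
        \<and> partial_menu_gap X Q L \<ge> 2^(k+1)"
        using core[OF P S O hb bpos adm c2 ms(2)] by simp
    qed
    then obtain Lb Xb Qb where blocks: "\<And>k. 1 \<le> Lb k \<and> valid_Q (Qb k) \<and>
        (\<forall>i. 1 \<le> i \<and> i \<le> Lb k \<longrightarrow> Xb k i \<in> supp D \<and> Xb k i \<noteq> 0 \<and> Xb k i \<in> nonneg_orthant \<and> gap (Xb k) (Qb k) i \<ge> 0)
        \<and> partial_menu_gap (Xb k) (Qb k) (Lb k) \<ge> 2^(k+1)"
      by metis
    obtain X where X: "\<forall>i. 1 \<le> i \<longrightarrow> X i \<in> supp D \<and> X i \<noteq> 0" "menu_gap \<infinity> X = \<infinity>"
      using concat[of Lb Qb "\<lambda>x. x \<in> supp D" Xb] blocks by blast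
    show ?thesis using X by (intro exI[of _ "\<infinity>"] exI[of _ X]) auto
  qed
qed

end
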